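(* Let $\mathcal{A}\subseteq M_2(\mathbb{C})$ be the algebra of upper triangular $2\times 2$ matrices $\begin{pmatrix}\alpha&\beta\\0&\gamma\end{pmatrix}$, and for $c\in\mathbb{C}\setminus\{0\}$ let $V_c=\left\{\begin{pmatrix} y & x\\ 0 & y+cx\end{pmatrix} : x,y\in\mathbb{C}\right\}$. Then for every $c\in\mathbb{C}\setminus\{0\}$ and every $\phi\in\Phi(\mathcal{A})$, $\phi\colon\mathcal{A}\to\mathcal{B}\subseteq\mathbf{B}(\mathcal{H})$, with $\mathcal{A}_\phi = V_c$, we have $\|\phi\|\,\|\phi^{-1}\| \ge \frac{1}{|c|}$.
   Context: $\Phi(\mathcal{A})$ is the set of injective homomorphisms $\phi\colon\mathcal{A}\to\mathcal{B}$ onto an operator algebra $\mathcal{B}\subseteq\mathbf{B}(\mathcal{H})$ with $\|\phi\|_{cb}<\infty$ and $\|\phi^{-1}\|_{cb}<\infty$ (cb norms with respect to matrix norms inherited from $M_n(\mathbf{B}(\mathcal{H}))$, and the norm of $M_2(\mathbb{C})$ on $\mathcal{A}$); $\mathcal{A}_\phi=\phi^{-1}(\mathcal{B}\cap\mathcal{B}^* )$, where $\mathcal{B}^*$ is the set of adjoints of elements of $\mathcal{B}$. Here $\|\phi\|,\|\phi^{-1}\|$ are the ordinary operator norms. *)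

theory Defs
  imports "HOL-Analysis.Analysis"
begin

text \<open>A complex Hilbert space: a real Banach space carrying a compatible complex
  scalar multiplication and a complex inner product (linear in the second
  argument) inducing the norm.\<close>

class chilbert = banach +
  fixes cscale :: "complex \<Rightarrow> 'a \<Rightarrow> 'a"
    and cinner :: "'a \<Rightarrow> 'a \<Rightarrow> complex"
  assumes cscale_add_right: "cscale a (x + y) = cscale a x + cscale a y"
    and cscale_add_left: "cscale (a + b) x = cscale a x + cscale b x"
    and cscale_cscale: "cscale a (cscale b x) = cscale (a * b) x"
    and cscale_one: "cscale 1 x = x"
    and cscale_of_real: "cscale (complex_of_real r) x = scaleR r x"
    and cinner_cnj: "cinner x y = cnj (cinner y x)"
    and cinner_add_right: "cinner x (y + z) = cinner x y + cinner x z"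
    and cinner_cscale_right: "cinner x (cscale a y) = a * cinner x y"
    and norm_cinner: "norm x = sqrt (Re (cinner x x))"

definition bounded_op :: "('h::chilbert \<Rightarrow> 'h) \<Rightarrow> bool" where
  "bounded_op T \<longleftrightarrow> (\<forall>x y. T (x + y) = T x + T y) \<and> (\<forall>a x. T (cscale a x) = cscale a (T x))
     \<and> (\<exists>K. \<forall>x. norm (T x) \<le> K * norm x)"

definition is_adjoint :: "('h::chilbert \<Rightarrow> 'h) \<Rightarrow> ('h \<Rightarrow> 'h) \<Rightarrow> bool" where
  "is_adjoint S T \<longleftrightarrow> (\<forall>x y. cinner (T x) y = cinner x (S y))"

definition mat2 :: "complex \<Rightarrow> complex \<Rightarrow> complex \<Rightarrow> complex \<Rightarrow> complex^2^2" where
  "mat2 a b c d = vector [vector [a, b], vector [c, d]]"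

definition upper_tri :: "(complex^2^2) set" where
  "upper_tri = {mat2 \<alpha> \<beta> 0 \<gamma> | \<alpha> \<beta> \<gamma>. True}"

definition V :: "complex \<Rightarrow> (complex^2^2) set" where
  "V c = {mat2 y x 0 (y + c * x) | x y. True}"

text \<open>Operator (spectral) norm of a 2x2 matrix, acting on the Hilbert space C^2.\<close>
definition mnorm :: "complex^2^2 \<Rightarrow> real" where
  "mnorm a = onorm (\<lambda>v. a *v v)"

definition smat :: "complex \<Rightarrow> complex^2^2 \<Rightarrow> complex^2^2" where
  "smat s a = (\<chi> i j. s * a $ i $ j)"

text \<open>Norm of an n x n matrix (T i j) of operators on a normed space E, regarded as
  an operator on the l2-direct sum E^n.\<close>
definition mat_opnorm :: "nat \<Rightarrow> (nat \<Rightarrow> nat \<Rightarrow> 'e::real_normed_vector \<Rightarrow> 'e) \<Rightarrow> real" where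
  "mat_opnorm n T = Sup {sqrt (\<Sum>i<n. (norm (\<Sum>j<n. T i j (x j)))\<^sup>2) | x.
                           (\<Sum>j<n. (norm (x j))\<^sup>2) \<le> 1}"

text \<open>Norm on M_n(A), inherited from M_n(M_2(C)) = M_2n(C).\<close>
definition Mn_norm_A :: "nat \<Rightarrow> (nat \<Rightarrow> nat \<Rightarrow> complex^2^2) \<Rightarrow> real" where
  "Mn_norm_A n a = mat_opnorm n (\<lambda>i j v. a i j *v v)"

text \<open>The set Phi(A): injective algebra homomorphisms phi of A onto B = phi(A),
  a subalgebra of B(H), with phi and phi^{-1} completely bounded.\<close>
definition Phi :: "(complex^2^2) set \<Rightarrow> (complex^2^2 \<Rightarrow> ('h::chilbert \<Rightarrow> 'h)) set" where
  "Phi A = {\<phi>. (\<forall>a\<in>A. bounded_op (\<phi> a))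
      \<and> (\<forall>a\<in>A. \<forall>b\<in>A. \<phi> (a + b) = (\<lambda>x. \<phi> a x + \<phi> b x))
      \<and> (\<forall>s. \<forall>a\<in>A. \<phi> (smat s a) = (\<lambda>x. cscale s (\<phi> a x)))
      \<and> (\<forall>a\<in>A. \<forall>b\<in>A. \<phi> (a ** b) = \<phi> a \<circ> \<phi> b)
      \<and> inj_on \<phi> A
      \<and> (\<exists>K. \<forall>n a. (\<forall>i<n. \<forall>j<n. a i j \<in> A) \<longrightarrow>
             mat_opnorm n (\<lambda>i j. \<phi> (a i j)) \<le> K * Mn_norm_A n a)
      \<and> (\<exists>K. \<forall>n a. (\<forall>i<n. \<forall>j<n. a i j \<in> A) \<longrightarrow>
             Mn_norm_A n a \<le> K * mat_opnorm n (\<lambda>i j. \<phi> (a i j)))}"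

text \<open>A_phi = phi^{-1}(B \<inter> B^*), with B = phi(A).\<close>
definition A_phi :: "(complex^2^2) set \<Rightarrow> (complex^2^2 \<Rightarrow> ('h::chilbert \<Rightarrow> 'h)) \<Rightarrow> (complex^2^2) set" where
  "A_phi A \<phi> = {a \<in> A. \<exists>b\<in>A. is_adjoint (\<phi> a) (\<phi> b)}"

text \<open>Ordinary norms of phi and of phi^{-1} (B \<rightarrow> A).\<close>
definition phi_norm :: "(complex^2^2) set \<Rightarrow> (complex^2^2 \<Rightarrow> ('h::chilbert \<Rightarrow> 'h)) \<Rightarrow> real" where
  "phi_norm A \<phi> = Sup {onorm (\<phi> a) | a. a \<in> A \<and> mnorm a \<le> 1}"

definition phi_inv_norm :: "(complex^2^2) set \<Rightarrow> (complex^2^2 \<Rightarrow> ('h::chilbert \<Rightarrow> 'h)) \<Rightarrow> real" where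
  "phi_inv_norm A \<phi> = Sup {mnorm a | a. a \<in> A \<and> onorm (\<phi> a) \<le> 1}"

end

theory Submission imports Defs begin

lemma cinner_zero_right: "cinner (x::'h::chilbert) 0 = 0"
  using cinner_add_right[of x 0 0] by simp

lemma cinner_add_left: "cinner ((x::'h::chilbert) + y) z = cinner x z + cinner y z"
  by (metis cinner_cnj cinner_add_right complex_cnj_add)

lemma norm_sq_cinner: "(norm (x::'h::chilbert))^2 = Re (cinner x x)"
proof -
  have "0 \<le> Re (cinner x x)"
    by (metis norm_cinner norm_ge_zero real_sqrt_ge_0_iff)
  then show ?thesis by (simp add: norm_cinner)
qed

lemma bounded_op_bl: "bounded_op (T::'h::chilbert \<Rightarrow> 'h) \<Longrightarrow> bounded_linear T"
  unfolding bounded_op_def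
proof (elim conjE exE)
  fix K assume a: "\<forall>x y. T (x + y) = T x + T y" "\<forall>a x. T (cscale a x) = cscale a (T x)"
    "\<forall>x. norm (T x) \<le> K * norm x"
  show "bounded_linear T"
    apply (rule bounded_linear_intro[where K=K])
    using a by (auto simp: cscale_of_real[symmetric] mult.commute)
qed

lemma sup_ball_onorm:
  assumes "bounded_linear f"
  shows "Sup {norm (f x) | x. norm x \<le> 1} = onorm f"
proof -
  interpret f: bounded_linear f by fact
  let ?S = "{norm (f x) | x. norm x \<le> 1}"
  have ub: "y \<le> onorm f" if "y \<in> ?S" for y
  proof -
    from that obtain x where x: "y = norm (f x)" "norm x \<le> 1" by auto
    have "norm (f x) \<le> onorm f * norm x" using onorm[OF assms] by blast
    also have "\<dots> \<le> onorm f" using x onorm_pos_le[OF assms]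
      by (simp add: mult_left_le)
    finally show ?thesis using x by simp
  qed
  have bdd: "bdd_above ?S" using ub by (auto simp: bdd_above_def)
  have z: "0 \<in> ?S" by (rule CollectI, rule exI[of _ 0], simp add: f.zero)
  have ne: "?S \<noteq> {}" using z by blast
  have le1: "Sup ?S \<le> onorm f" by (rule cSup_least[OF ne]) (use ub in auto)
  have s0: "0 \<le> Sup ?S" by (rule cSup_upper[OF z bdd])
  have "onorm f \<le> Sup ?S"
  proof (rule onorm_bound[OF s0])
    fix x
    show "norm (f x) \<le> Sup ?S * norm x"
    proof (cases "x = 0")
      case True then show ?thesis by (simp add: f.zero)
    next
      case False
      then have np: "norm x > 0" by simp
      have "norm (f (scaleR (1/norm x) x)) \<in> ?S" by (rule CollectI, rule exI[of _ "scaleR (1/norm x) x"], simp)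
      then have "norm (f (scaleR (1/norm x) x)) \<le> Sup ?S" by (rule cSup_upper[OF _ bdd])
      then have "norm (f x) / norm x \<le> Sup ?S" by (simp add: f.scaleR divide_inverse mult.commute)
      then show ?thesis using np by (simp add: divide_le_eq)
    qed
  qed
  with le1 show ?thesis by simp
qed

lemma mat_opnorm_1:
  assumes "bounded_linear g"
  shows "mat_opnorm 1 (\<lambda>i j. g) = onorm g"
proof -
  have l1: "{..<1::nat} = {0}" by auto
  have "{sqrt (\<Sum>i<(1::nat). (norm (\<Sum>j<(1::nat). (\<lambda>i j. g) i j (x j)))\<^sup>2) | x. (\<Sum>j<1::nat. (norm (x j))\<^sup>2) \<le> 1}
        = {norm (g x) | x. norm x \<le> 1}"
  proof (intro set_eqI iffI)
    fix y assume "y \<in> {sqrt (\<Sum>i<(1::nat). (norm (\<Sum>j<(1::nat). (\<lambda>i j. g) i j (x j)))\<^sup>2) | x. (\<Sum>j<1::nat. (norm (x j))\<^sup>2) \<le> 1}"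
    then obtain x where "y = norm (g (x 0))" "(norm (x 0))^2 \<le> 1" using l1 by auto
    then show "y \<in> {norm (g x) | x. norm x \<le> 1}"
      by (auto simp: power_le_one_iff abs_square_le_1)
  next
    fix y assume "y \<in> {norm (g x) | x. norm x \<le> 1}"
    then obtain x where x: "y = norm (g x)" "norm x \<le> 1" by auto
    then have "(norm x)^2 \<le> 1" by (simp add: power_le_one)
    then show "y \<in> {sqrt (\<Sum>i<(1::nat). (norm (\<Sum>j<(1::nat). (\<lambda>i j. g) i j (x j)))\<^sup>2) | x. (\<Sum>j<1::nat. (norm (x j))\<^sup>2) \<le> 1}"
      using x l1 by (intro CollectI exI[of _ "\<lambda>_. x"]) simp
  qed
  then show ?thesis unfolding mat_opnorm_def using sup_ball_onorm[OF assms] by simp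
qed

lemma mat2_mult: "mat2 a b c d ** mat2 e f g h = mat2 (a*e+b*g) (a*f+b*h) (c*e+d*g) (c*f+d*h)"
  by (simp add: mat2_def matrix_matrix_mult_def vec_eq_iff forall_2 sum_2)

lemma mat2_vec: "(mat2 a b c d *v v) = vector [a * v$1 + b * v$2, c * v$1 + d * v$2]"
  by (simp add: mat2_def matrix_vector_mult_def vec_eq_iff forall_2 sum_2)

lemma norm_axis_c: "norm (axis (m::2) (1::complex)) = 1"
  by (rule norm_Basis) (auto simp: Basis_vec_def)

lemma vec2_eta: "vector [x $ 1, x $ 2] = (x::'a::zero^2)"
  by (simp add: vec_eq_iff forall_2)

lemma mat2_11: "mat2 a b c d $ 1 $ 1 = a"
  by (simp add: mat2_def)

theorem lemma2:
  fixes c :: complex and \<phi> :: "complex^2^2 \<Rightarrow> ('h::chilbert \<Rightarrow> 'h)"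
  assumes "c \<noteq> 0"
    and "\<phi> \<in> Phi upper_tri"
    and "A_phi upper_tri \<phi> = V c"
  shows "phi_norm upper_tri \<phi> * phi_inv_norm upper_tri \<phi> \<ge> 1 / cmod c"
proof -
  let ?A = upper_tri
  note ph = assms(2)[unfolded Phi_def mem_Collect_eq]
  have bo: "\<forall>a\<in>?A. bounded_op (\<phi> a)"
    and mul: "\<forall>a\<in>?A. \<forall>b\<in>?A. \<phi> (a ** b) = \<phi> a \<circ> \<phi> b"
    and inj: "inj_on \<phi> ?A"
    and cb1: "\<exists>K. \<forall>n a. (\<forall>i<n. \<forall>j<n. a i j \<in> ?A) \<longrightarrow>
             mat_opnorm n (\<lambda>i j. \<phi> (a i j)) \<le> K * Mn_norm_A n a"
    and cb2: "\<exists>K. \<forall>n a. (\<forall>i<n. \<forall>j<n. a i j \<in> ?A) \<longrightarrow>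
             Mn_norm_A n a \<le> K * mat_opnorm n (\<lambda>i j. \<phi> (a i j))"
    using ph by - (elim conjE; assumption)+
  have bl: "bounded_linear (\<phi> a)" if "a \<in> ?A" for a
    using bo that bounded_op_bl by blast
  have mn: "Mn_norm_A 1 (\<lambda>i j. a) = mnorm a" for a
    unfolding Mn_norm_A_def mnorm_def using mat_opnorm_1[of "(*v) a"] by simp
  obtain K1 where K1: "\<And>a. a \<in> ?A \<Longrightarrow> onorm (\<phi> a) \<le> K1 * mnorm a"
  proof -
    from cb1 obtain K where K: "\<forall>n a. (\<forall>i<n. \<forall>j<n. a i j \<in> ?A) \<longrightarrow>
             mat_opnorm n (\<lambda>i j. \<phi> (a i j)) \<le> K * Mn_norm_A n a" by blast
    have "onorm (\<phi> a) \<le> K * mnorm a" if "a \<in> ?A" for a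
      using K[rule_format, of 1 "\<lambda>i j. a"] that mat_opnorm_1[OF bl[OF that]] mn by simp
    then show ?thesis using that by blast
  qed
  obtain K2 where K2: "\<And>a. a \<in> ?A \<Longrightarrow> mnorm a \<le> K2 * onorm (\<phi> a)"
  proof -
    from cb2 obtain K where K: "\<forall>n a. (\<forall>i<n. \<forall>j<n. a i j \<in> ?A) \<longrightarrow>
             Mn_norm_A n a \<le> K * mat_opnorm n (\<lambda>i j. \<phi> (a i j))" by blast
    have "mnorm a \<le> K * onorm (\<phi> a)" if "a \<in> ?A" for a
      using K[rule_format, of 1 "\<lambda>i j. a"] that mat_opnorm_1[OF bl[OF that]] mn by simp
    then show ?thesis using that by blast
  qed
  have mnorm_ge0: "0 \<le> mnorm a" for a
    unfolding mnorm_def by (rule onorm_pos_le) simp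
  have bdd1: "bdd_above {onorm (\<phi> a) | a. a \<in> ?A \<and> mnorm a \<le> 1}"
  proof (rule bdd_aboveI)
    fix y assume "y \<in> {onorm (\<phi> a) | a. a \<in> ?A \<and> mnorm a \<le> 1}"
    then obtain a where a: "y = onorm (\<phi> a)" "a \<in> ?A" "mnorm a \<le> 1" by blast
    have "K1 * mnorm a \<le> \<bar>K1\<bar> * mnorm a" by (rule mult_right_mono[OF abs_ge_self mnorm_ge0])
    also have "\<dots> \<le> \<bar>K1\<bar>" by (rule mult_left_le[OF a(3) abs_ge_zero])
    finally show "y \<le> \<bar>K1\<bar>" using K1[OF a(2)] a(1) by linarith
  qed
  have bdd2: "bdd_above {mnorm a | a. a \<in> ?A \<and> onorm (\<phi> a) \<le> 1}"
  proof (rule bdd_aboveI)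
    fix y assume "y \<in> {mnorm a | a. a \<in> ?A \<and> onorm (\<phi> a) \<le> 1}"
    then obtain a where a: "y = mnorm a" "a \<in> ?A" "onorm (\<phi> a) \<le> 1" by blast
    have o0: "0 \<le> onorm (\<phi> a)" using onorm_pos_le[OF bl[OF a(2)]] .
    have "K2 * onorm (\<phi> a) \<le> \<bar>K2\<bar> * onorm (\<phi> a)" by (rule mult_right_mono[OF abs_ge_self o0])
    also have "\<dots> \<le> \<bar>K2\<bar>" by (rule mult_left_le[OF a(3) abs_ge_zero])
    finally show "y \<le> \<bar>K2\<bar>" using K2[OF a(2)] a(1) by linarith
  qed
  define P where "P = mat2 0 (1/c) 0 1"
  define I where "I = mat2 1 0 0 (1::complex)"
  have PA: "P \<in> ?A" unfolding upper_tri_def P_def by blast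
  have IA: "I \<in> ?A" unfolding upper_tri_def I_def by blast
  have "P \<in> V c" unfolding V_def P_def using assms(1)
    by (intro CollectI exI[of _ "1/c"] exI[of _ 0]) simp
  then have "P \<in> A_phi ?A \<phi>" using assms(3) by simp
  then obtain b where bA: "b \<in> ?A" and adj: "\<And>x y. cinner (\<phi> b x) y = cinner x (\<phi> P y)"
    unfolding A_phi_def is_adjoint_def by blast
  define T where "T = \<phi> P"
  define R where "R = \<phi> b"
  have adjR: "cinner (R x) y = cinner x (T y)" for x y using adj unfolding R_def T_def .
  have adjT: "cinner (T x) y = cinner x (R y)" for x y
    by (metis adjR cinner_cnj)
  have "b \<in> A_phi ?A \<phi>" unfolding A_phi_def is_adjoint_def
    using bA PA adjT unfolding T_def R_def by blast
  then have "b \<in> V c" using assms(3) by simp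
  then obtain x0 y0 where b: "b = mat2 y0 x0 0 (y0 + c*x0)" unfolding V_def by blast
  have comm: "P ** b = b ** P" using assms(1) unfolding b P_def
    by (simp add: mat2_mult distrib_left)
  have TR: "T (R x) = R (T x)" for x
  proof -
    have "\<phi> (P ** b) = \<phi> P \<circ> \<phi> b" using mul PA bA by blast
    moreover have "\<phi> (b ** P) = \<phi> b \<circ> \<phi> P" using mul PA bA by blast
    ultimately have "\<phi> P \<circ> \<phi> b = \<phi> b \<circ> \<phi> P" using comm by simp
    then show ?thesis unfolding T_def R_def by (simp add: fun_eq_iff)
  qed
  have PP: "P ** P = P" unfolding P_def by (simp add: mat2_mult)
  have TT: "T (T x) = T x" for x
  proof -
    have "\<phi> (P ** P) = \<phi> P \<circ> \<phi> P" using mul PA by blast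
    then have "\<phi> P \<circ> \<phi> P = \<phi> P" using PP by simp
    then show ?thesis unfolding T_def by (simp add: fun_eq_iff)
  qed
  have blT: "bounded_linear T" unfolding T_def using bl PA by blast
  have blR: "bounded_linear R" unfolding R_def using bl bA by blast
  have nTR: "norm (T x) = norm (R x)" for x
  proof -
    have "(norm (T x))^2 = Re (cinner x (R (T x)))" using norm_sq_cinner[of "T x"] adjT[of x "T x"] by simp
    also have "\<dots> = (norm (R x))^2" using norm_sq_cinner[of "R x"] adjR[of x "R x"] TR[of x] by simp
    finally show ?thesis using power2_eq_imp_eq norm_ge_zero by metis
  qed
  have Tle: "norm (T x) \<le> norm x" for x
  proof -
    define u where "u = x - T x"
    have "T u = 0" unfolding u_def using TT linear_diff[OF bounded_linear.linear[OF blT]] by simp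
    then have "R u = 0" using nTR[of u] by simp
    then have o: "cinner (T x) u = 0" by (simp add: adjT cinner_zero_right)
    then have o2: "cinner u (T x) = 0" using cinner_cnj[of u "T x"] by simp
    have "(norm x)^2 = (norm (T x + u))^2" unfolding u_def by simp
    also have "\<dots> = (norm (T x))^2 + (norm u)^2"
      by (simp add: norm_sq_cinner cinner_add_left cinner_add_right o o2)
    finally have eq: "(norm x)^2 = (norm (T x))^2 + (norm u)^2" .
    have "(norm (T x))^2 \<le> (norm x)^2" using eq zero_le_power2[of "norm u"] by linarith
    then show ?thesis by (rule power2_le_imp_le[OF _ norm_ge_zero])
  qed
  have onT: "onorm T \<le> 1" by (rule onorm_bound) (use Tle in auto)
  have inv_ge: "phi_inv_norm ?A \<phi> \<ge> mnorm P"
    unfolding phi_inv_norm_def using PA onT unfolding T_def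
    by (intro cSup_upper[OF _ bdd2]) blast
  have "1 / cmod c = norm ((P *v axis (2::2) (1::complex)) $ 1)"
    unfolding P_def by (simp add: mat2_vec axis_def norm_divide)
  also have "\<dots> \<le> norm (P *v axis (2::2) (1::complex))" by (rule Finite_Cartesian_Product.norm_nth_le)
  also have "\<dots> \<le> mnorm P * norm (axis (2::2) (1::complex))"
    unfolding mnorm_def by (rule onorm) simp
  also have "\<dots> = mnorm P" by (simp add: norm_axis_c)
  finally have Pge: "1 / cmod c \<le> mnorm P" .
  define S where "S = \<phi> I"
  have II: "I ** I = I" unfolding I_def by (simp add: mat2_mult)
  have IP: "I ** P = P" unfolding I_def P_def by (simp add: mat2_mult)
  have SS: "S (S x) = S x" for x
  proof -
    have "\<phi> (I ** I) = \<phi> I \<circ> \<phi> I" using mul IA by blast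
    then have "\<phi> I \<circ> \<phi> I = \<phi> I" using II by simp
    then show ?thesis unfolding S_def by (simp add: fun_eq_iff)
  qed
  have "S \<noteq> (\<lambda>x. 0)"
  proof
    assume S0: "S = (\<lambda>x. 0)"
    have "\<phi> P = \<phi> (I ** P)" using IP by simp
    also have "\<dots> = S \<circ> T" using mul IA PA unfolding S_def T_def by blast
    also have "\<dots> = S" using S0 by (simp add: comp_def)
    finally have "P = I" using inj PA IA unfolding S_def by (meson inj_on_eq_iff)
    then show False using mat2_11[of 0 "1/c" 0 1] mat2_11[of 1 0 0 1] unfolding P_def I_def by simp
  qed
  then obtain x where "S x \<noteq> 0" by auto
  define w where "w = S x"
  have w0: "w \<noteq> 0" and Sw: "S w = w" using \<open>S x \<noteq> 0\<close> SS unfolding w_def by auto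
  have "norm w \<le> onorm S * norm w" using onorm[of S w] bl[OF IA] Sw unfolding S_def by simp
  then have S1: "1 \<le> onorm S" using w0 by simp
  have "mnorm I \<le> 1" unfolding mnorm_def
    by (rule onorm_bound) (simp_all add: I_def mat2_vec vec2_eta)
  then have norm_ge: "phi_norm ?A \<phi> \<ge> 1"
  proof -
    have "onorm (\<phi> I) \<in> {onorm (\<phi> a) | a. a \<in> ?A \<and> mnorm a \<le> 1}"
      using IA \<open>mnorm I \<le> 1\<close> by blast
    then have "onorm (\<phi> I) \<le> phi_norm ?A \<phi>" unfolding phi_norm_def by (rule cSup_upper[OF _ bdd1])
    then show ?thesis using S1 unfolding S_def by linarith
  qed
  have "1 / cmod c = 1 * (1 / cmod c)" by simp
  also have "\<dots> \<le> phi_norm ?A \<phi> * phi_inv_norm ?A \<phi>"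
    using norm_ge inv_ge Pge by (intro mult_mono) auto
  finally show ?thesis .
qed

end
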